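(* Let $n\geq 2$ be an integer and $\zeta\in\mathbb{R}$. For $(x,y_{1},\ldots,y_{n})\in\mathbb{R}^{n+1}$ write $P(\zeta)=x+\zeta y_{1}+\cdots+\zeta^{n}y_{n}$ and $P^{\prime}(\zeta)=y_{1}+2\zeta y_{2}+\cdots+n\zeta^{n-1}y_{n}$. For real $Q>1$ and $R>0$ define \begin{align*} \chi_{A}(Q)&:=\{(x,y_{1},\ldots,y_{n})\in\mathbb{R}^{n+1}: \vert P(\zeta)\vert\leq Q^{-1}\},\\ \chi_{B}(R)&:=\{(x,y_{1},\ldots,y_{n})\in\mathbb{R}^{n+1}: \vert P^{\prime}(\zeta)\vert\leq R\},\\ \chi_{C}(Q)&:=\{(x,y_{1},\ldots,y_{n})\in\mathbb{R}^{n+1}: \vert y_{t}\vert\leq Q^{1/n},\ 1\leq t\leq n\}. \end{align*} Then there is a constant $E=E(n,\zeta)$ independent of $Q$ and $R$ such that for all sufficiently large $Q$ and all $R>0$, \[ \mathrm{vol}\left(\chi_{A}(Q)\cap\chi_{B}(R)\cap\chi_{C}(Q)\right)\leq E\,R\,Q^{-1/n}. \]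
   Context: $\mathrm{vol}$ denotes $(n+1)$-dimensional Lebesgue measure. *)

theory Defs
  imports "HOL-Analysis.Analysis"
begin

text \<open>Points of R^(n+1) are functions v on {0..n}: v 0 = x, v t = y_t (1 <= t <= n).
  (n+1)-dimensional Lebesgue measure is the product of Lebesgue measures on {0..n}.\<close>

definition vol_np1 :: "nat \<Rightarrow> (nat \<Rightarrow> real) measure" where
  "vol_np1 n = PiM {0..n} (\<lambda>_. lborel)"

definition polyP :: "nat \<Rightarrow> real \<Rightarrow> (nat \<Rightarrow> real) \<Rightarrow> real" where
  "polyP n \<zeta> v = v 0 + (\<Sum>t=1..n. \<zeta> ^ t * v t)"

definition polyP' :: "nat \<Rightarrow> real \<Rightarrow> (nat \<Rightarrow> real) \<Rightarrow> real" where
  "polyP' n \<zeta> v = (\<Sum>t=1..n. real t * \<zeta> ^ (t - 1) * v t)"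

definition chiA :: "nat \<Rightarrow> real \<Rightarrow> real \<Rightarrow> (nat \<Rightarrow> real) set" where
  "chiA n \<zeta> Q = {v \<in> PiE {0..n} (\<lambda>_. UNIV). \<bar>polyP n \<zeta> v\<bar> \<le> 1 / Q}"

definition chiB :: "nat \<Rightarrow> real \<Rightarrow> real \<Rightarrow> (nat \<Rightarrow> real) set" where
  "chiB n \<zeta> R = {v \<in> PiE {0..n} (\<lambda>_. UNIV). \<bar>polyP' n \<zeta> v\<bar> \<le> R}"

definition chiC :: "nat \<Rightarrow> real \<Rightarrow> (nat \<Rightarrow> real) set" where
  "chiC n Q = {v \<in> PiE {0..n} (\<lambda>_. UNIV). \<forall>t\<in>{1..n}. \<bar>v t\<bar> \<le> Q powr (1 / real n)}"

end

theory Submission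
  imports Defs
begin

lemma psf: "product_sigma_finite (\<lambda>_::nat. lborel::real measure)"
  by (simp add: product_sigma_finite_def lborel.sigma_finite_measure_axioms)

lemma step2:
  fixes n :: nat and \<zeta> R c :: real
  assumes n: "n \<ge> 2" and R: "R > 0" and c: "c \<ge> 0"
  defines "S' \<equiv> {v \<in> space (PiM {1..n} (\<lambda>_. lborel)). \<bar>polyP' n \<zeta> v\<bar> \<le> R \<and> (\<forall>t\<in>{1..n}. \<bar>v t\<bar> \<le> c)}"
  shows "emeasure (PiM {1..n} (\<lambda>_. lborel)) S' \<le> ennreal (2*R) * ennreal ((2*c)^(n-1))"
proof -
  interpret product_sigma_finite "\<lambda>_::nat. lborel::real measure" by (rule psf)
  have S'm: "S' \<in> sets (PiM {1..n} (\<lambda>_. lborel))"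
    unfolding S'_def polyP'_def by measurable
  have I: "{1..n} = insert 1 {2..n}" using n by auto
  define B where "B = PiE {2..n} (\<lambda>_. {-c..c})"
  define b where "b x = (\<Sum>t=2..n. real t * \<zeta> ^ (t - 1) * x t)" for x :: "nat \<Rightarrow> real"
  have "emeasure (PiM {1..n} (\<lambda>_. lborel)) S' = (\<integral>\<^sup>+ v. indicator S' v \<partial>PiM {1..n} (\<lambda>_. lborel))"
    using S'm by simp
  also have "\<dots> = (\<integral>\<^sup>+ x. (\<integral>\<^sup>+ y. indicator S' (x(1 := y)) \<partial>lborel) \<partial>PiM {2..n} (\<lambda>_. lborel))"
    unfolding I by (rule product_nn_integral_insert) (use S'm I in auto)
  also have "\<dots> \<le> (\<integral>\<^sup>+ x. ennreal (2*R) * indicator B x \<partial>PiM {2..n} (\<lambda>_. lborel))"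
  proof (rule nn_integral_mono)
    fix x assume x: "x \<in> space (PiM {2..n} (\<lambda>_::nat. lborel::real measure))"
    have "(\<integral>\<^sup>+ y. indicator S' (x(1 := y)) \<partial>lborel) \<le>
          (\<integral>\<^sup>+ y. indicator B x * indicator {-b x - R .. -b x + R} y \<partial>lborel)"
    proof (rule nn_integral_mono)
      fix y :: real
      show "(indicator S' (x(1 := y)) :: ennreal) \<le> indicator B x * indicator {-b x - R .. -b x + R} y"
      proof (cases "x(1 := y) \<in> S'")
        case True
        have "polyP' n \<zeta> (x(1 := y)) = y + b x"
          unfolding polyP'_def b_def I by (simp add: sum.insert)
        then have "\<bar>y + b x\<bar> \<le> R" using True unfolding S'_def by auto
        then have "y \<in> {-b x - R .. -b x + R}" by auto
        moreover have "x \<in> B"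
        proof -
          have xe: "x \<in> PiE {2..n} (\<lambda>_. UNIV)" using x by (simp add: space_PiM)
          { fix t assume t: "t \<in> {2..n}"
            then have "\<bar>(x(1:=y)) t\<bar> \<le> c" using True I unfolding S'_def by auto
            with t have "x t \<in> {-c..c}" by auto }
          with xe show ?thesis unfolding B_def by (auto simp: PiE_iff)
        qed
        ultimately show ?thesis using True by simp
      qed simp
    qed
    also have "\<dots> = indicator B x * (\<integral>\<^sup>+ y. indicator {-b x - R .. -b x + R} y \<partial>lborel)"
      by (rule nn_integral_cmult) simp
    also have "\<dots> = indicator B x * ennreal (2*R)"
      using R by simp
    finally show "(\<integral>\<^sup>+ y. indicator S' (x(1 := y)) \<partial>lborel) \<le> ennreal (2*R) * indicator B x"
      by (simp add: mult.commute)
  qed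
  also have "\<dots> = ennreal (2*R) * emeasure (PiM {2..n} (\<lambda>_. lborel)) B"
    by (rule nn_integral_cmult_indicator) (simp add: B_def)
  also have "emeasure (PiM {2..n} (\<lambda>_. lborel)) B = (\<Prod>t\<in>{2..n}. emeasure lborel {-c..c})"
    unfolding B_def by (rule emeasure_PiM) auto
  also have "\<dots> = ennreal ((2*c)^(n-1))"
  proof -
    have "emeasure lborel {-c..c} = ennreal (2*c)" using c by simp
    then have "(\<Prod>t\<in>{2..n}. emeasure lborel {-c..c}) = ennreal (2*c) ^ (n-1)"
      using n by simp
    also have "\<dots> = ennreal ((2*c)^(n-1))" using c by (intro ennreal_power) simp
    finally show ?thesis .
  qed
  finally show ?thesis .
qed

lemma step1:
  fixes n :: nat and \<zeta> Q R :: real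
  assumes n: "n \<ge> 2" and R: "R > 0" and Q: "Q > 1"
  shows "emeasure (vol_np1 n) (chiA n \<zeta> Q \<inter> chiB n \<zeta> R \<inter> chiC n Q)
     \<le> ennreal (2/Q) * (ennreal (2*R) * ennreal ((2*(Q powr (1/real n)))^(n-1)))"
proof -
  interpret product_sigma_finite "\<lambda>_::nat. lborel::real measure" by (rule psf)
  define c where "c = Q powr (1/real n)"
  have c: "c \<ge> 0" unfolding c_def by simp
  define S where "S = chiA n \<zeta> Q \<inter> chiB n \<zeta> R \<inter> chiC n Q"
  define S' where "S' = {v \<in> space (PiM {1..n} (\<lambda>_. lborel)). \<bar>polyP' n \<zeta> v\<bar> \<le> R \<and> (\<forall>t\<in>{1..n}. \<bar>v t\<bar> \<le> c)}"
  have sp: "space (PiM {0..n} (\<lambda>_::nat. lborel::real measure)) = PiE {0..n} (\<lambda>_. UNIV)"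
    by (simp add: space_PiM)
  have Seq: "S = {v \<in> space (PiM {0..n} (\<lambda>_. lborel)). \<bar>polyP n \<zeta> v\<bar> \<le> 1/Q \<and> \<bar>polyP' n \<zeta> v\<bar> \<le> R \<and> (\<forall>t\<in>{1..n}. \<bar>v t\<bar> \<le> c)}"
    unfolding S_def chiA_def chiB_def chiC_def sp c_def by auto
  have Sm: "S \<in> sets (PiM {0..n} (\<lambda>_. lborel))"
    unfolding Seq polyP'_def polyP_def by measurable
  have I: "{0..n} = insert 0 {1..n}" by auto
  define a where "a x = (\<Sum>t=1..n. \<zeta> ^ t * x t)" for x :: "nat \<Rightarrow> real"
  have "emeasure (vol_np1 n) S = (\<integral>\<^sup>+ v. indicator S v \<partial>PiM {0..n} (\<lambda>_. lborel))"
    using Sm by (simp add: vol_np1_def)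
  also have "\<dots> = (\<integral>\<^sup>+ x. (\<integral>\<^sup>+ y. indicator S (x(0 := y)) \<partial>lborel) \<partial>PiM {1..n} (\<lambda>_. lborel))"
    unfolding I by (rule product_nn_integral_insert) (use Sm I in auto)
  also have "\<dots> \<le> (\<integral>\<^sup>+ x. ennreal (2/Q) * indicator S' x \<partial>PiM {1..n} (\<lambda>_. lborel))"
  proof (rule nn_integral_mono)
    fix x assume x: "x \<in> space (PiM {1..n} (\<lambda>_::nat. lborel::real measure))"
    have "(\<integral>\<^sup>+ y. indicator S (x(0 := y)) \<partial>lborel) \<le>
          (\<integral>\<^sup>+ y. indicator S' x * indicator {-a x - 1/Q .. -a x + 1/Q} y \<partial>lborel)"
    proof (rule nn_integral_mono)
      fix y :: real
      show "(indicator S (x(0 := y)) :: ennreal) \<le> indicator S' x * indicator {-a x - 1/Q .. -a x + 1/Q} y"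
      proof (cases "x(0 := y) \<in> S")
        case True
        have "polyP n \<zeta> (x(0 := y)) = y + a x"
          unfolding polyP_def a_def by (simp add: sum.insert)
        then have "\<bar>y + a x\<bar> \<le> 1/Q" using True unfolding Seq by auto
        then have "y \<in> {-a x - 1/Q .. -a x + 1/Q}" by auto
        moreover have "x \<in> S'"
        proof -
          have "polyP' n \<zeta> (x(0 := y)) = polyP' n \<zeta> x"
            unfolding polyP'_def by (intro sum.cong) auto
          then show ?thesis using True x unfolding Seq S'_def by auto
        qed
        ultimately show ?thesis using True by simp
      qed simp
    qed
    also have "\<dots> = indicator S' x * (\<integral>\<^sup>+ y. indicator {-a x - 1/Q .. -a x + 1/Q} y \<partial>lborel)"
      by (rule nn_integral_cmult) simp
    also have "\<dots> = indicator S' x * ennreal (2/Q)"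
      using Q by simp
    finally show "(\<integral>\<^sup>+ y. indicator S (x(0 := y)) \<partial>lborel) \<le> ennreal (2/Q) * indicator S' x"
      by (simp add: mult.commute)
  qed
  also have "\<dots> = ennreal (2/Q) * emeasure (PiM {1..n} (\<lambda>_. lborel)) S'"
    by (rule nn_integral_cmult_indicator) (simp add: S'_def polyP'_def)
  also have "\<dots> \<le> ennreal (2/Q) * (ennreal (2*R) * ennreal ((2*c)^(n-1)))"
    unfolding S'_def by (intro mult_left_mono step2 n R c) simp
  finally show ?thesis unfolding S_def c_def .
qed

lemma arith:
  fixes n :: nat and Q R :: real
  assumes n: "n \<ge> 2" and Q: "Q > 1"
  shows "2/Q * (2*R) * (2*(Q powr (1/real n)))^(n-1) = 2^(n+1) * R * Q powr (- 1 / real n)"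
proof -
  have Q0: "Q > 0" using Q by simp
  have "(Q powr (1/real n))^(n-1) = (Q powr (1/real n)) powr real (n-1)"
    using Q0 by (simp add: powr_realpow)
  also have "\<dots> = Q powr (real (n-1) / real n)" by (simp add: powr_powr)
  finally have e1: "(Q powr (1/real n))^(n-1) = Q powr (real (n-1) / real n)" .
  have "Q powr (real (n-1) / real n) / Q = Q powr (real (n-1) / real n - 1)"
    using Q0 by (simp add: powr_diff)
  also have "real (n-1) / real n - 1 = - 1 / real n" using n by (simp add: of_nat_diff field_simps)
  finally have e2: "Q powr (real (n-1) / real n) / Q = Q powr (- 1 / real n)" .
  have nn: "n+1 = (n-1) + 2" using n by simp
  have p: "(2::real)^(n+1) = 4 * 2^(n-1)" unfolding nn power_add by simp
  show ?thesis unfolding power_mult_distrib e1 p using e2[symmetric]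
    by (simp add: field_simps)
qed

theorem lemma1:
  fixes n :: nat and \<zeta> :: real
  assumes "n \<ge> 2"
  shows "\<exists>E::real. \<exists>Q0::real. \<forall>Q R. Q > 1 \<and> Q \<ge> Q0 \<and> R > 0 \<longrightarrow>
           emeasure (vol_np1 n) (chiA n \<zeta> Q \<inter> chiB n \<zeta> R \<inter> chiC n Q)
             \<le> ennreal (E * R * Q powr (- 1 / real n))"
proof (intro exI allI impI)
  fix Q R :: real assume h: "Q > 1 \<and> Q \<ge> 0 \<and> R > 0"
  have "emeasure (vol_np1 n) (chiA n \<zeta> Q \<inter> chiB n \<zeta> R \<inter> chiC n Q)
     \<le> ennreal (2/Q) * (ennreal (2*R) * ennreal ((2*(Q powr (1/real n)))^(n-1)))"
    using step1[OF assms] h by auto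
  also have "\<dots> = ennreal (2/Q * (2*R) * (2*(Q powr (1/real n)))^(n-1))"
  proof -
    have "0 \<le> (2*(Q powr (1/real n)))^(n-1)" by simp
    moreover have "0 \<le> 2*R" "0 \<le> 2/Q" using h by auto
    ultimately show ?thesis
      by (simp only: ennreal_mult[symmetric] mult_nonneg_nonneg mult.assoc)
  qed
  also have "\<dots> = ennreal (2^(n+1) * R * Q powr (- 1 / real n))"
    using arith[OF assms, of Q R] h by simp
  finally show "emeasure (vol_np1 n) (chiA n \<zeta> Q \<inter> chiB n \<zeta> R \<inter> chiC n Q)
             \<le> ennreal (2^(n+1) * R * Q powr (- 1 / real n))" .
qed

end
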